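(* Let $q$ be a prime number and $\mathbb{A}=\mathbb{Q}\cap[-1,0[$. Then $\mathbb{A}\text{-}\mathcal{KS}(q^{2})=\emptyset$.
   Context: Every nonzero rational $\alpha$ is written $\alpha=\alpha_1/\alpha_2$ with $\alpha_1\in\mathbb{Z}$, $\alpha_2$ a positive integer and $\gcd(\alpha_1,\alpha_2)=1$. For an integer $N\ge 2$ and a nonzero rational $\alpha=\alpha_1/\alpha_2$, $N$ is called an $\alpha$-Korselt number if $N\neq\alpha$ and $\alpha_2p-\alpha_1$ divides $\alpha_2N-\alpha_1$ (in $\mathbb{Z}$) for every prime divisor $p$ of $N$. For a subset $\mathbb{A}\subseteq\mathbb{Q}$, $\mathbb{A}\text{-}\mathcal{KS}(N)$ denotes the set of all $\beta\in\mathbb{A}\setminus\{0,N\}$ such that $N$ is a $\beta$-Korselt number. $[-1,0[$ denotes the half-open interval $\{x:-1\le x<0\}$. *)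

theory Defs
  imports Complex_Main "HOL-Computational_Algebra.Primes"
begin

text \<open>alpha = a1/a2 in lowest terms with a2 > 0 is given by quotient_of.\<close>
definition korselt :: "nat \<Rightarrow> rat \<Rightarrow> bool" where
  "korselt N \<alpha> \<longleftrightarrow> N \<ge> 2 \<and> \<alpha> \<noteq> 0 \<and> \<alpha> \<noteq> of_nat N \<and>
     (let (a1, a2) = quotient_of \<alpha> in
       \<forall>p::nat. prime p \<and> p dvd N \<longrightarrow> (a2 * int p - a1) dvd (a2 * int N - a1))"

definition KS :: "rat set \<Rightarrow> nat \<Rightarrow> rat set" where
  "KS A N = {\<beta> \<in> A - {0, of_nat N}. korselt N \<beta>}"

end

theory Submission
  imports Defs
begin

lemma key:
  fixes a1 a2 q :: int
  assumes "a2 > 0" "a1 < 0" "-a1 \<le> a2" "q \<ge> 2"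
    and d: "(a2 * q - a1) dvd (a2 * q^2 - a1)"
  shows False
proof -
  have e: "a2 * q^2 - a1 = q * (a2 * q - a1) + a1 * (q - 1)"
    by (simp add: algebra_simps power2_eq_square)
  have "(a2 * q - a1) dvd (a1 * (q - 1))"
    using d unfolding e by (metis dvd_add_right_iff dvd_triv_right)
  hence "(a2 * q - a1) dvd (-a1) * (q - 1)" by simp
  moreover have "(-a1) * (q - 1) > 0" using assms by (intro mult_pos_pos) auto
  ultimately have le: "a2 * q - a1 \<le> (-a1) * (q - 1)" by (simp add: zdvd_imp_le)
  have "(-a1) * (q - 1) < (-a1) * q" using assms by simp
  also have "\<dots> \<le> a2 * q" using assms by (intro mult_right_mono) auto
  finally show False using le assms by simp
qed

theorem corollary5p8:
  fixes q :: nat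
  assumes "prime q"
  shows "KS {\<beta>::rat. -1 \<le> \<beta> \<and> \<beta> < 0} (q^2) = {}"
proof (rule ccontr)
  assume "KS {\<beta>::rat. -1 \<le> \<beta> \<and> \<beta> < 0} (q^2) \<noteq> {}"
  then obtain \<beta> where b: "-1 \<le> \<beta>" "\<beta> < 0" "korselt (q^2) \<beta>"
    unfolding KS_def by auto
  obtain a1 a2 where qa: "quotient_of \<beta> = (a1, a2)" by (cases "quotient_of \<beta>")
  have a2: "a2 > 0" using quotient_of_denom_pos[OF qa] .
  have bd: "\<beta> = of_int a1 / of_int a2" using quotient_of_div[OF qa] .
  have "of_int a1 / of_int a2 < (0::rat)" using b bd by simp
  hence a1: "a1 < 0" using a2 by (simp add: divide_less_0_iff)
  have "(-1::rat) \<le> of_int a1 / of_int a2" using b bd by simp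
  hence "- of_int a2 \<le> (of_int a1::rat)" using a2 by (simp add: le_divide_eq)
  hence a12: "-a1 \<le> a2" by linarith
  have "(a2 * int q - a1) dvd (a2 * int (q^2) - a1)"
    using b(3) assms qa unfolding korselt_def by auto
  hence "(a2 * int q - a1) dvd (a2 * (int q)^2 - a1)" by simp
  moreover have "int q \<ge> 2" using prime_ge_2_nat[OF assms] by simp
  ultimately show False using key a2 a1 a12 by blast
qed

end
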